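(* Let $n,d\in\mathbb N$, $d\ge2$, $u\in\mathcal U^n(\mathbb R)$, and $F:=\mathcal I_d[\mathrm{abs}*u]$. Then $F$ is even, convex, positive and $(n+2)$-times continuously differentiable, and $$F(s)=C_d|s|+\mathcal O(1/s)\quad (s\to\infty),\qquad C_d:=\frac{\Gamma(d/2)}{\sqrt\pi\,\Gamma(\frac{d+1}{2})}.$$ In particular $F-C_d\,\mathrm{abs}\in\mathcal C_0(\mathbb R)\cap L^2(\mathbb R)$, and $F'$ is bounded and continuous with $F'(0)=0$. Moreover, with $u_\varepsilon(x)=\varepsilon^{-1}u(x/\varepsilon)$ and $F^\varepsilon:=\mathcal I_d[\mathrm{abs}*u_\varepsilon]$, one has $\|F^\varepsilon-C_d\,\mathrm{abs}\|_{L^2(\mathbb R)}\to0$ and $F^\varepsilon(s)\to C_d|s|$ for every $s\in\mathbb R$ as $\varepsilon\to0$.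
   Context: $\mathrm{abs}(x)=|x|$. $\mathcal U^n(\mathbb R):=\{u\in\mathcal C^n_c(\mathbb R):u\ge0,\ \hat u\ge0,\ u\text{ even},\ \int u=1\}$ with $\hat u(\omega)=\int e^{-2\pi ix\omega}u(x)\mathrm dx$. $\mathcal I_d[f](s):=c_d\int_0^1f(ts)(1-t^2)^{\frac{d-3}{2}}\mathrm dt$ with $c_d:=2w_{d-2}/w_{d-1}$, $w_{d-1}:=2\pi^{d/2}/\Gamma(d/2)$. $\mathcal C_0(\mathbb R)$: continuous functions vanishing at infinity. *)

theory Defs
  imports "HOL-Analysis.Analysis" "HOL-Library.Landau_Symbols"
begin

definition Ck :: "nat \<Rightarrow> (real \<Rightarrow> real) \<Rightarrow> bool" where
  "Ck k f \<longleftrightarrow> (\<forall>j<k. \<forall>x. ((deriv ^^ j) f) differentiable (at x)) \<and>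
               (\<forall>j\<le>k. continuous_on UNIV ((deriv ^^ j) f))"

definition fourier :: "(real \<Rightarrow> real) \<Rightarrow> real \<Rightarrow> complex" where
  "fourier u w = (LINT x|lborel. cis (- 2 * pi * x * w) * complex_of_real (u x))"

definition U_class :: "nat \<Rightarrow> (real \<Rightarrow> real) set" where
  "U_class n = {u. Ck n u \<and> compact (closure {x. u x \<noteq> 0})
      \<and> (\<forall>x. u x \<ge> 0)
      \<and> (\<forall>w. fourier u w \<in> \<real> \<and> Re (fourier u w) \<ge> 0)
      \<and> (\<forall>x. u (- x) = u x)
      \<and> (LINT x|lborel. u x) = 1}"

definition abs_conv :: "(real \<Rightarrow> real) \<Rightarrow> real \<Rightarrow> real" where
  "abs_conv u x = (LINT y|lborel. \<bar>x - y\<bar> * u y)"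

text \<open>w_{d-1} = 2 pi^{d/2} / Gamma(d/2), written as a function of the real d.\<close>
definition wsph :: "real \<Rightarrow> real" where
  "wsph d = 2 * pi powr (d / 2) / Gamma (d / 2)"

definition c_const :: "nat \<Rightarrow> real" where
  "c_const d = 2 * wsph (real d - 1) / wsph (real d)"

definition I_op :: "nat \<Rightarrow> (real \<Rightarrow> real) \<Rightarrow> real \<Rightarrow> real" where
  "I_op d f s = c_const d *
     (LINT t:{0..1}|lborel. f (t * s) * (1 - t\<^sup>2) powr ((real d - 3) / 2))"

definition C_const :: "nat \<Rightarrow> real" where
  "C_const d = Gamma (real d / 2) / (sqrt pi * Gamma ((real d + 1) / 2))"

end

theory Submission
  imports Defs
begin
definition wt :: "nat \<Rightarrow> real \<Rightarrow> real" where
  "wt d t = (1 - t\<^sup>2) powr ((real d - 3) / 2)"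

lemma wt_nonneg: "wt d t \<ge> 0" by (simp add: wt_def)

lemma wt_meas[measurable]: "wt d \<in> borel_measurable borel"
  unfolding wt_def by measurable

lemma alg1: "- (p * a * - (2 * x)) / D = (2 * p / D) * (x * (a::real))"
  by (simp add: divide_simps)

lemma tw_has_integral:
  assumes d: "d \<ge> 2"
  shows "((\<lambda>t. t * wt d t) has_integral 1 / (real d - 1)) {0..1}"
proof -
  define p where "p = (real d - 1) / 2"
  have p: "p > 0" using d by (simp add: p_def)
  define \<Phi> where "\<Phi> t = - ((1 - t\<^sup>2) powr p) / (real d - 1)" for t
  have "((\<lambda>t. t * wt d t) has_integral (\<Phi> 1 - \<Phi> 0)) {0..1}"
  proof (rule fundamental_theorem_of_calculus_interior_strong[where S="{}"])
    show "continuous_on {0..1} \<Phi>" unfolding \<Phi>_def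
      using p d by (intro continuous_on_divide continuous_on_minus continuous_on_powr' continuous_intros)
        (auto simp: abs_square_le_1)
    fix x :: real assume x: "x \<in> {0<..<1} - {}"
    from x have "0 < x" "x < 1" by auto
    then have x2: "x\<^sup>2 < 1" by (simp add: abs_square_less_1)
    then have pos: "1 - x\<^sup>2 > 0" by simp
    have "((\<lambda>t. (1 - t\<^sup>2) powr p) has_real_derivative p * (1 - x\<^sup>2) powr (p - 1) * (- (2 * x))) (at x)"
      by (rule DERIV_fun_powr[of _ _ x, simplified]) (auto intro!: derivative_eq_intros simp: pos x2)
    then have "(\<Phi> has_real_derivative - (p * (1 - x\<^sup>2) powr (p - 1) * (- (2 * x))) / (real d - 1)) (at x)"
      unfolding \<Phi>_def by (intro DERIV_cdivide DERIV_minus)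
    moreover have "- (p * (1 - x\<^sup>2) powr (p - 1) * (- (2 * x))) / (real d - 1) = x * wt d x"
    proof -
      have e: "p - 1 = (real d - 3) / 2" by (simp add: p_def field_simps)
      have "real d - 1 \<noteq> 0" using d by simp
      then have "2 * p / (real d - 1) = 1" by (simp add: p_def)
      then show ?thesis unfolding wt_def e
        using alg1[of p "(1 - x\<^sup>2) powr ((real d - 3) / 2)" x "real d - 1"] by simp
    qed
    ultimately show "(\<Phi> has_vector_derivative x * wt d x) (at x)"
      by (simp add: has_real_derivative_iff_has_vector_derivative)
  qed auto
  moreover have "\<Phi> 1 - \<Phi> 0 = 1 / (real d - 1)" using p by (simp add: \<Phi>_def)
  ultimately show ?thesis by simp
qed

lemma hk_to_lborel:
  fixes f :: "real \<Rightarrow> real"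
  assumes I: "(f has_integral I) {a..b}" and nn: "\<And>x. x \<in> {a..b} \<Longrightarrow> f x \<ge> 0"
    and m: "f \<in> borel_measurable borel"
  shows "set_integrable lborel {a..b} f" "(LINT x:{a..b}|lborel. f x) = I"
proof -
  have ai: "f absolutely_integrable_on {a..b}"
    using I nn by (intro nonnegative_absolutely_integrable_1) (auto simp: integrable_on_def)
  have mm: "(\<lambda>x. indicator {a..b} x *\<^sub>R f x) \<in> borel_measurable lborel"
    using m by measurable
  show si: "set_integrable lborel {a..b} f"
    using ai integrable_completion[OF mm] unfolding set_integrable_def by simp
  have "(LINT x:{a..b}|lborel. f x) = integral {a..b} f"
    by (rule set_borel_integral_eq_integral(2)[OF si])
  then show "(LINT x:{a..b}|lborel. f x) = I" using I by (simp add: integral_unique)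
qed

lemma tw_int:
  assumes "d \<ge> 2"
  shows "set_integrable lborel {0..1} (\<lambda>t. t * wt d t)"
    "(LINT t:{0..1}|lborel. t * wt d t) = 1 / (real d - 1)"
  using hk_to_lborel[OF tw_has_integral[OF assms]] by (auto simp: wt_nonneg)

lemma wt_le2:
  assumes d: "d \<ge> 2" and t: "0 \<le> t" "t \<le> 1/2"
  shows "wt d t \<le> 2"
proof -
  have t2: "t\<^sup>2 \<le> 1/4" using t power_mono[of t "1/2" 2] by (simp add: power_divide)
  then have b: "3/4 \<le> 1 - t\<^sup>2" "1 - t\<^sup>2 \<le> 1" by auto
  show ?thesis
  proof (cases "d = 2")
    case True
    then have "wt d t = (1 - t\<^sup>2) powr (- (1/2))" by (simp add: wt_def)
    also have "\<dots> \<le> (3/4) powr (-(1/2))"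
      using b by (intro powr_mono2') auto
    also have "\<dots> = inverse (sqrt (3/4))" by (simp add: powr_minus powr_half_sqrt)
    also have "\<dots> \<le> 2"
    proof -
      have "sqrt (1/4) \<le> sqrt (3/4)" by simp
      moreover have "sqrt (1/4) = 1/2" by (simp add: real_sqrt_divide)
      ultimately have "1/2 \<le> sqrt (3/4)" by simp
      from le_imp_inverse_le[OF this] show ?thesis by simp
    qed
    finally show ?thesis .
  next
    case False
    then have "(real d - 3) / 2 \<ge> 0" using d by simp
    then have "wt d t \<le> 1 powr ((real d - 3) / 2)"
      unfolding wt_def using b by (intro powr_mono2) auto
    then show ?thesis by simp
  qed
qed

lemma wt_int:
  assumes d: "d \<ge> 2"
  shows "set_integrable lborel {0..1} (wt d)"
proof -
  have "set_integrable lborel {0..1} (\<lambda>t. 2 + 2 * (t * wt d t))"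
    by (intro set_integral_add set_integrable_mult_right tw_int[OF d])
       (simp add: set_integrable_def integrable_mult_left)
  then show ?thesis
  proof (rule set_integrable_bound)
    show "set_borel_measurable lborel {0..1} (wt d)"
      unfolding set_borel_measurable_def by measurable
    show "AE x in lborel. x \<in> {0..1} \<longrightarrow> norm (wt d x) \<le> norm (2 + 2 * (x * wt d x))"
    proof (intro AE_I2 impI)
      fix x :: real assume x: "x \<in> {0..1}"
      have nn: "0 \<le> x * wt d x" using x wt_nonneg by simp
      show "norm (wt d x) \<le> norm (2 + 2 * (x * wt d x))"
      proof (cases "x \<le> 1/2")
        case True
        then have "wt d x \<le> 2" using wt_le2[OF d, of x] x by simp
        then show ?thesis using nn wt_nonneg[of d x] by simp
      next
        case False
        then have "wt d x \<le> 2 * (x * wt d x)"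
          using wt_nonneg[of d x] mult_right_mono[of "1/2" x "wt d x"] by auto
        then show ?thesis using nn wt_nonneg[of d x] by simp
      qed
    qed
  qed
qed

lemma set_int_abs_bound:
  fixes f g :: "real \<Rightarrow> real"
  assumes "set_integrable lborel A f" "set_integrable lborel A g" "\<And>t. t \<in> A \<Longrightarrow> \<bar>f t\<bar> \<le> g t"
  shows "\<bar>LINT t:A|lborel. f t\<bar> \<le> (LINT t:A|lborel. g t)"
  using assms unfolding set_integrable_def set_lebesgue_integral_def
  by (intro integral_abs_bound_integral) (auto split: split_indicator)

lemma set_int_nonneg:
  fixes f :: "real \<Rightarrow> real"
  assumes "\<And>t. t \<in> A \<Longrightarrow> 0 \<le> f t"
  shows "0 \<le> (LINT t:A|M. f t)"
  unfolding set_lebesgue_integral_def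
  using assms by (intro integral_nonneg_AE AE_I2) (auto split: split_indicator)

lemma PI_int:
  fixes g :: "real \<Rightarrow> real"
  assumes g: "continuous_on UNIV g" and nu: "set_integrable lborel {0..1} nu"
  shows "set_integrable lborel {0..1} (\<lambda>t. g (t * s) * nu t)"
proof -
  have c: "continuous_on UNIV (\<lambda>t. g (t * s))"
    by (rule continuous_on_compose2[OF g]) (simp_all add: continuous_intros)
  have "compact ((\<lambda>t. g (t * s)) ` {0..1})"
    by (rule compact_continuous_image[OF continuous_on_subset[OF c]]) auto
  then have "bounded ((\<lambda>t. g (t * s)) ` {0..1})" by (rule compact_imp_bounded)
  then obtain M where M0: "\<forall>t\<in>{0..1}. \<bar>g (t * s)\<bar> \<le> M"
    unfolding bounded_iff by auto
  then have M: "\<And>t. t \<in> {0..1} \<Longrightarrow> \<bar>g (t * s)\<bar> \<le> M" by blast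
  have "set_integrable lborel {0..1} (\<lambda>t. M * nu t)" using nu by simp
  then show ?thesis
  proof (rule set_integrable_bound)
    have gm: "(\<lambda>t. g (t * s)) \<in> borel_measurable lborel"
      by (intro borel_measurable_continuous_on[OF g]) measurable
    have "(\<lambda>t. indicator {0..1} t *\<^sub>R nu t) \<in> borel_measurable lborel"
      using nu unfolding set_integrable_def by (rule borel_measurable_integrable)
    then have "(\<lambda>t. g (t * s) * (indicator {0..1} t *\<^sub>R nu t)) \<in> borel_measurable lborel"
      using gm by measurable
    then show "set_borel_measurable lborel {0..1} (\<lambda>t. g (t * s) * nu t)"
      unfolding set_borel_measurable_def by (simp add: mult.left_commute)
    show "AE x in lborel. x \<in> {0..1} \<longrightarrow> norm (g (x * s) * nu x) \<le> norm (M * nu x)"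
    proof (intro AE_I2 impI)
      fix x :: real assume x: "x \<in> {0..1}"
      have "\<bar>g (x * s)\<bar> \<le> \<bar>M\<bar>" using M[OF x] by linarith
      then show "norm (g (x * s) * nu x) \<le> norm (M * nu x)"
        by (simp add: abs_mult mult_right_mono)
    qed
  qed
qed

lemma mvt_bound:
  fixes g g' :: "real \<Rightarrow> real"
  assumes der: "\<And>x. (g has_real_derivative g' x) (at x)"
    and e: "\<And>z. \<bar>z - y\<bar> \<le> \<bar>h\<bar> \<Longrightarrow> \<bar>g' z - g' y\<bar> \<le> e"
  shows "\<bar>g (y + h) - g y - h * g' y\<bar> \<le> \<bar>h\<bar> * e"
proof (cases "h = 0")
  case True then show ?thesis by simp
next
  case False
  show ?thesis
  proof (cases "h > 0")
    case True
    from MVT2[of y "y + h" g g'] True der obtain z where z: "y < z" "z < y + h" "g (y + h) - g y = h * g' z"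
      by auto
    then have "\<bar>g' z - g' y\<bar> \<le> e" using e True by simp
    then show ?thesis using z True by (simp add: right_diff_distrib[symmetric] abs_mult mult_left_mono)
  next
    case neg: False
    with False have h: "h < 0" by simp
    from MVT2[of "y + h" y g g'] h der obtain z where z: "y + h < z" "z < y" "g y - g (y + h) = (- h) * g' z"
      by auto
    then have "\<bar>g' z - g' y\<bar> \<le> e" using e h by simp
    moreover have "g (y + h) - g y - h * g' y = h * (g' z - g' y)" using z by (simp add: algebra_simps)
    ultimately show ?thesis by (simp add: abs_mult mult_left_mono)
  qed
qed

lemma PI_deriv:
  fixes g g' nu :: "real \<Rightarrow> real"
  assumes der: "\<And>x. (g has_real_derivative g' x) (at x)"
    and cg': "continuous_on UNIV g'"
    and nu: "set_integrable lborel {0..1} nu"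
  shows "((\<lambda>s. LINT t:{0..1}|lborel. g (t * s) * nu t) has_real_derivative
           (LINT t:{0..1}|lborel. g' (t * s0) * (t * nu t))) (at s0)"
proof -
  have cg: "continuous_on UNIV g"
    using der by (meson DERIV_isCont continuous_at_imp_continuous_on)
  have inu: "set_integrable lborel {0..1} (\<lambda>t. t * nu t)"
    using PI_int[OF continuous_on_id nu, of 1] by simp
  have anu: "set_integrable lborel {0..1} (\<lambda>t. \<bar>nu t\<bar>)"
    using nu by (rule set_integrable_abs)
  define N where "N = (LINT t:{0..1}|lborel. \<bar>nu t\<bar>)"
  have N0: "N \<ge> 0" unfolding N_def by (intro set_int_nonneg) auto
  define H where "H s = (LINT t:{0..1}|lborel. g (t * s) * nu t)" for s
  define K where "K = (LINT t:{0..1}|lborel. g' (t * s0) * (t * nu t))"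
  have "((\<lambda>s. (H s - H s0) / (s - s0)) \<longlongrightarrow> K) (at s0)"
    unfolding LIM_eq
  proof (intro allI impI)
    fix r :: real assume r: "r > 0"
    define e where "e = r / (2 * (N + 1))"
    have e0: "e > 0" using r N0 by (simp add: e_def)
    have "uniformly_continuous_on (cball 0 (\<bar>s0\<bar> + 1)) g'"
      by (intro compact_uniformly_continuous continuous_on_subset[OF cg']) auto
    then obtain \<delta> where \<delta>: "\<delta> > 0"
      "\<And>x x'. x \<in> cball 0 (\<bar>s0\<bar> + 1) \<Longrightarrow> x' \<in> cball 0 (\<bar>s0\<bar> + 1) \<Longrightarrow> dist x' x < \<delta> \<Longrightarrow> dist (g' x') (g' x) < e"
      unfolding uniformly_continuous_on_def using e0 by metis
    show "\<exists>d>0. \<forall>s. s \<noteq> s0 \<and> norm (s - s0) < d \<longrightarrow> norm ((H s - H s0) / (s - s0) - K) < r"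
    proof (intro exI[of _ "min \<delta> 1"] conjI allI impI)
      show "min \<delta> 1 > 0" using \<delta> by simp
      fix s assume s: "s \<noteq> s0 \<and> norm (s - s0) < min \<delta> 1"
      have pw: "\<bar>g (t * s) - g (t * s0) - (s - s0) * (g' (t * s0) * t)\<bar> \<le> \<bar>s - s0\<bar> * e"
        if t: "t \<in> {0..1}" for t
      proof -
        have "\<bar>g (t * s0 + t * (s - s0)) - g (t * s0) - t * (s - s0) * g' (t * s0)\<bar> \<le> \<bar>t * (s - s0)\<bar> * e"
        proof (rule mvt_bound[OF der])
          fix z assume z: "\<bar>z - t * s0\<bar> \<le> \<bar>t * (s - s0)\<bar>"
          have ht: "\<bar>t * (s - s0)\<bar> \<le> \<bar>s - s0\<bar>" using t by (simp add: abs_mult mult_left_le_one_le)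
          have ts0: "\<bar>t * s0\<bar> \<le> \<bar>s0\<bar>" using t by (simp add: abs_mult mult_left_le_one_le)
          have "t * s0 \<in> cball 0 (\<bar>s0\<bar> + 1)" using ts0 by simp
          moreover have "z \<in> cball 0 (\<bar>s0\<bar> + 1)" using z ht ts0 s by (simp; arith)
          moreover have "dist z (t * s0) < \<delta>" using z ht s by (simp add: dist_real_def)
          ultimately show "\<bar>g' z - g' (t * s0)\<bar> \<le> e" using \<delta>(2) by (force simp: dist_real_def)
        qed
        moreover have "\<bar>t * (s - s0)\<bar> * e \<le> \<bar>s - s0\<bar> * e"
          using t e0 by (intro mult_right_mono) (simp_all add: abs_mult mult_left_le_one_le)
        ultimately show ?thesis by (simp add: algebra_simps)
      qed
      have i1: "set_integrable lborel {0..1} (\<lambda>t. g (t * s) * nu t)" by (rule PI_int[OF cg nu])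
      have i2: "set_integrable lborel {0..1} (\<lambda>t. g (t * s0) * nu t)" by (rule PI_int[OF cg nu])
      have i3: "set_integrable lborel {0..1} (\<lambda>t. g' (t * s0) * (t * nu t))" by (rule PI_int[OF cg' inu])
      have eq: "H s - H s0 - (s - s0) * K =
          (LINT t:{0..1}|lborel. (g (t * s) - g (t * s0) - (s - s0) * (g' (t * s0) * t)) * nu t)"
      proof -
        have "(LINT t:{0..1}|lborel. (g (t * s) - g (t * s0) - (s - s0) * (g' (t * s0) * t)) * nu t)
           = (LINT t:{0..1}|lborel. (g (t * s) * nu t - g (t * s0) * nu t) - (s - s0) * (g' (t * s0) * (t * nu t)))"
          by (simp add: algebra_simps)
        also have "\<dots> = (LINT t:{0..1}|lborel. (g (t * s) * nu t - g (t * s0) * nu t)) - (LINT t:{0..1}|lborel. (s - s0) * (g' (t * s0) * (t * nu t)))"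
          using i1 i2 i3 by (intro set_integral_diff(2)) auto
        also have "\<dots> = H s - H s0 - (s - s0) * K"
          unfolding H_def K_def using i1 i2 by (simp add: set_integral_diff(2))
        finally show ?thesis by simp
      qed
      have "\<bar>H s - H s0 - (s - s0) * K\<bar> \<le> (LINT t:{0..1}|lborel. (\<bar>s - s0\<bar> * e) * \<bar>nu t\<bar>)"
        unfolding eq
      proof (rule set_int_abs_bound)
        show "set_integrable lborel {0..1} (\<lambda>t. (g (t * s) - g (t * s0) - (s - s0) * (g' (t * s0) * t)) * nu t)"
        proof -
          have "set_integrable lborel {0..1} (\<lambda>t. (g (t * s) * nu t - g (t * s0) * nu t) - (s - s0) * (g' (t * s0) * (t * nu t)))"
            using i1 i2 i3 by auto
          moreover have "(\<lambda>t. (g (t * s) * nu t - g (t * s0) * nu t) - (s - s0) * (g' (t * s0) * (t * nu t)))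
            = (\<lambda>t. (g (t * s) - g (t * s0) - (s - s0) * (g' (t * s0) * t)) * nu t)"
            by (auto simp: fun_eq_iff algebra_simps)
          ultimately show ?thesis by simp
        qed
        show "set_integrable lborel {0..1} (\<lambda>t. (\<bar>s - s0\<bar> * e) * \<bar>nu t\<bar>)"
          using anu by simp
        fix t :: real assume "t \<in> {0..1}"
        then show "\<bar>(g (t * s) - g (t * s0) - (s - s0) * (g' (t * s0) * t)) * nu t\<bar> \<le> (\<bar>s - s0\<bar> * e) * \<bar>nu t\<bar>"
          using pw[of t] by (simp add: abs_mult mult_right_mono)
      qed
      also have "\<dots> = \<bar>s - s0\<bar> * e * N" by (simp add: N_def)
      finally have b: "\<bar>H s - H s0 - (s - s0) * K\<bar> \<le> \<bar>s - s0\<bar> * (e * N)" by (simp add: mult.assoc)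
      have ne: "\<bar>s - s0\<bar> > 0" using s by simp
      have "norm ((H s - H s0) / (s - s0) - K) = \<bar>H s - H s0 - (s - s0) * K\<bar> / \<bar>s - s0\<bar>"
      proof -
        have "(H s - H s0) / (s - s0) - K = (H s - H s0 - (s - s0) * K) / (s - s0)"
          using ne by (simp add: field_simps)
        then show ?thesis by (simp add: abs_divide)
      qed
      also have "\<dots> \<le> e * N" using b ne by (simp add: divide_le_eq mult.commute)
      also have "e * N < r"
      proof -
        have "e * N \<le> e * (N + 1)" using e0 by simp
        also have "\<dots> = r / 2" using N0 by (simp add: e_def field_simps)
        finally show ?thesis using r by simp
      qed
      finally show "norm ((H s - H s0) / (s - s0) - K) < r" .
    qed
  qed
  then show ?thesis unfolding has_field_derivative_iff H_def K_def .
qed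

lemma PI_cont:
  fixes g nu :: "real \<Rightarrow> real"
  assumes cg: "continuous_on UNIV g"
    and nu: "set_integrable lborel {0..1} nu"
  shows "continuous_on UNIV (\<lambda>s. LINT t:{0..1}|lborel. g (t * s) * nu t)"
  unfolding continuous_on_iff
proof (intro ballI allI impI)
  fix s0 r :: real assume r: "r > 0"
  have anu: "set_integrable lborel {0..1} (\<lambda>t. \<bar>nu t\<bar>)"
    using nu by (rule set_integrable_abs)
  define N where "N = (LINT t:{0..1}|lborel. \<bar>nu t\<bar>)"
  have N0: "N \<ge> 0" unfolding N_def by (intro set_int_nonneg) auto
  define H where "H s = (LINT t:{0..1}|lborel. g (t * s) * nu t)" for s
  define e where "e = r / (2 * (N + 1))"
  have e0: "e > 0" using r N0 by (simp add: e_def)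
  have "uniformly_continuous_on (cball 0 (\<bar>s0\<bar> + 1)) g"
    by (intro compact_uniformly_continuous continuous_on_subset[OF cg]) auto
  then obtain \<delta> where \<delta>: "\<delta> > 0"
    "\<And>x x'. x \<in> cball 0 (\<bar>s0\<bar> + 1) \<Longrightarrow> x' \<in> cball 0 (\<bar>s0\<bar> + 1) \<Longrightarrow> dist x' x < \<delta> \<Longrightarrow> dist (g x') (g x) < e"
    unfolding uniformly_continuous_on_def using e0 by metis
  show "\<exists>d>0. \<forall>s\<in>UNIV. dist s s0 < d \<longrightarrow> dist (H s) (H s0) < r"
  proof (intro exI[of _ "min \<delta> 1"] conjI ballI impI)
    show "min \<delta> 1 > 0" using \<delta> by simp
    fix s assume "s \<in> (UNIV :: real set)" and s: "dist s s0 < min \<delta> 1"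
    have pw: "\<bar>g (t * s) - g (t * s0)\<bar> \<le> e" if t: "t \<in> {0..1}" for t
    proof -
      have ht: "\<bar>t * (s - s0)\<bar> \<le> \<bar>s - s0\<bar>" using t by (simp add: abs_mult mult_left_le_one_le)
      have ts0: "\<bar>t * s0\<bar> \<le> \<bar>s0\<bar>" using t by (simp add: abs_mult mult_left_le_one_le)
      have "t * s0 \<in> cball 0 (\<bar>s0\<bar> + 1)" using ts0 by simp
      moreover have "t * s \<in> cball 0 (\<bar>s0\<bar> + 1)" using ht ts0 s
        by (simp add: dist_real_def right_diff_distrib; arith)
      moreover have "dist (t * s) (t * s0) < \<delta>" using ht s by (simp add: dist_real_def right_diff_distrib)
      ultimately show ?thesis using \<delta>(2) by (force simp: dist_real_def)
    qed
    have i1: "set_integrable lborel {0..1} (\<lambda>t. g (t * s) * nu t)" by (rule PI_int[OF cg nu])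
    have i2: "set_integrable lborel {0..1} (\<lambda>t. g (t * s0) * nu t)" by (rule PI_int[OF cg nu])
    have eq: "H s - H s0 = (LINT t:{0..1}|lborel. (g (t * s) - g (t * s0)) * nu t)"
      unfolding H_def using i1 i2 by (simp add: set_integral_diff(2) left_diff_distrib)
    have "\<bar>H s - H s0\<bar> \<le> (LINT t:{0..1}|lborel. e * \<bar>nu t\<bar>)"
      unfolding eq
    proof (rule set_int_abs_bound)
      show "set_integrable lborel {0..1} (\<lambda>t. (g (t * s) - g (t * s0)) * nu t)"
        using i1 i2 by (simp add: left_diff_distrib)
      show "set_integrable lborel {0..1} (\<lambda>t. e * \<bar>nu t\<bar>)" using anu by simp
      fix t :: real assume "t \<in> {0..1}"
      then show "\<bar>(g (t * s) - g (t * s0)) * nu t\<bar> \<le> e * \<bar>nu t\<bar>"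
        using pw[of t] by (simp add: abs_mult mult_right_mono)
    qed
    also have "\<dots> = e * N" by (simp add: N_def)
    also have "e * N < r"
    proof -
      have "e * N \<le> e * (N + 1)" using e0 by simp
      also have "\<dots> = r / 2" using N0 by (simp add: e_def field_simps)
      finally show ?thesis using r by simp
    qed
    finally show "dist (H s) (H s0) < r" by (simp add: dist_real_def)
  qed
qed

definition dchain :: "nat \<Rightarrow> (nat \<Rightarrow> real \<Rightarrow> real) \<Rightarrow> bool" where
  "dchain k g \<longleftrightarrow> (\<forall>j<k. \<forall>x. (g j has_real_derivative g (Suc j) x) (at x)) \<and>
     (\<forall>j\<le>k. continuous_on UNIV (g j))"

lemma dchain_deriv:
  assumes "dchain k g" "j \<le> k"
  shows "(deriv ^^ j) (g 0) = g j"
  using assms(2)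
proof (induction j)
  case 0 then show ?case by simp
next
  case (Suc j)
  then have IH: "(deriv ^^ j) (g 0) = g j" by simp
  moreover have "\<forall>x. (g j has_real_derivative g (Suc j) x) (at x)"
    using assms(1) Suc.prems unfolding dchain_def by auto
  moreover have "(deriv ^^ Suc j) (g 0) = deriv ((deriv ^^ j) (g 0))" by simp
  ultimately show ?case unfolding IH funpow.simps o_def IH
    by (auto simp: fun_eq_iff intro: DERIV_imp_deriv)
qed

lemma dchain_Ck:
  assumes "dchain k g" shows "Ck k (g 0)"
  unfolding Ck_def
proof (intro conjI allI impI)
  fix j x assume j: "j < k"
  then have "(deriv ^^ j) (g 0) = g j" using dchain_deriv[OF assms] by simp
  moreover have "(g j has_real_derivative g (Suc j) x) (at x)" using assms j unfolding dchain_def by auto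
  ultimately show "(deriv ^^ j) (g 0) differentiable at x"
    using real_differentiable_def by auto
next
  fix j assume j: "j \<le> k"
  then show "continuous_on UNIV ((deriv ^^ j) (g 0))"
    using dchain_deriv[OF assms j] assms unfolding dchain_def by auto
qed

lemma Ck_dchain:
  assumes "Ck k u" shows "dchain k (\<lambda>j. (deriv ^^ j) u)"
  using assms unfolding Ck_def dchain_def
  by (auto simp: DERIV_deriv_iff_real_differentiable)

lemma dchain_PI:
  fixes c :: real
  assumes g: "dchain k g" and nu: "set_integrable lborel {0..1} nu"
  shows "dchain k (\<lambda>j s. c * (LINT t:{0..1}|lborel. g j (t * s) * (t ^ j * nu t)))"
proof -
  have nuj: "set_integrable lborel {0..1} (\<lambda>t. t ^ j * nu t)" for j
  proof -
    have "continuous_on UNIV (\<lambda>x::real. x ^ j)" by (intro continuous_intros)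
    from PI_int[OF this nu, where s=1] show ?thesis by simp
  qed
  show ?thesis unfolding dchain_def
  proof (intro conjI allI impI)
    fix j x assume j: "j < k"
    have "((\<lambda>s. LINT t:{0..1}|lborel. g j (t * s) * (t ^ j * nu t)) has_real_derivative
           (LINT t:{0..1}|lborel. g (Suc j) (t * x) * (t * (t ^ j * nu t)))) (at x)"
      by (rule PI_deriv[OF _ _ nuj]) (use g j in \<open>auto simp: dchain_def\<close>)
    then show "((\<lambda>s. c * (LINT t:{0..1}|lborel. g j (t * s) * (t ^ j * nu t))) has_real_derivative
           c * (LINT t:{0..1}|lborel. g (Suc j) (t * x) * (t ^ Suc j * nu t))) (at x)"
      by (intro DERIV_cmult) (simp add: mult.assoc)
  next
    fix j assume j: "j \<le> k"
    have "continuous_on UNIV (\<lambda>s. LINT t:{0..1}|lborel. g j (t * s) * (t ^ j * nu t))"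
      by (rule PI_cont[OF _ nuj]) (use g j in \<open>auto simp: dchain_def\<close>)
    then show "continuous_on UNIV (\<lambda>s. c * (LINT t:{0..1}|lborel. g j (t * s) * (t ^ j * nu t)))"
      by (intro continuous_intros)
  qed
qed

lemma supp_int:
  fixes g :: "real \<Rightarrow> real"
  assumes cg: "continuous_on UNIV g" and sp: "\<And>y. g y \<noteq> 0 \<Longrightarrow> p \<le> y \<and> y \<le> q"
  shows "integrable lborel g" "(LINT y|lborel. g y) = integral {p..q} g"
proof -
  have eq: "(\<lambda>y. indicator {p..q} y *\<^sub>R g y) = g"
    using sp by (force simp: fun_eq_iff indicator_def)
  have si: "set_integrable lborel {p..q} g"
    by (rule borel_integrable_atLeastAtMost'[OF continuous_on_subset[OF cg]]) auto
  then show "integrable lborel g" unfolding set_integrable_def eq .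
  show "(LINT y|lborel. g y) = integral {p..q} g"
    using set_borel_integral_eq_integral(2)[OF si] unfolding set_lebesgue_integral_def eq .
qed

lemma FTCa:
  fixes g :: "real \<Rightarrow> real"
  assumes cg: "continuous_on UNIV g" and z: "\<And>y. y \<le> a + 1 \<Longrightarrow> g y = 0"
  shows "((\<lambda>x. integral {a..x} g) has_real_derivative g x) (at x)"
proof (cases "x > a")
  case True
  have "((\<lambda>x. integral {a..x} g) has_vector_derivative g x) (at x within {a..x+1})"
    by (rule integral_has_vector_derivative[OF continuous_on_subset[OF cg]]) (use True in auto)
  moreover have "at x within {a..x+1} = at x"
    by (rule at_within_interior) (use True in auto)
  ultimately show ?thesis by (simp add: has_real_derivative_iff_has_vector_derivative)
next
  case False
  then have gx: "g x = 0" using z by simp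
  have ev: "eventually (\<lambda>y. y \<in> {..<a+1}) (nhds x)"
    by (rule eventually_nhds_in_open) (use False in auto)
  have "eventually (\<lambda>y. integral {a..y} g = 0) (nhds x)"
    using ev
  proof eventually_elim
    case (elim y)
    show ?case by (rule integral_unique[OF has_integral_is_0]) (use elim z in auto)
  qed
  then have "DERIV (\<lambda>x. integral {a..x} g) x :> 0 \<longleftrightarrow> DERIV (\<lambda>x. 0) x :> 0"
    by (intro DERIV_cong_ev) auto
  then show ?thesis using gx by simp
qed

locale Uctx =
  fixes u :: "real \<Rightarrow> real" and r :: real
  assumes ucont: "continuous_on UNIV u" and rpos: "r > 0"
    and supp: "\<And>y. u y \<noteq> 0 \<Longrightarrow> \<bar>y\<bar> < r"
    and unn: "\<And>y. u y \<ge> 0" and ueven: "\<And>y. u (-y) = u y"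
    and uint: "(LINT y|lborel. u y) = 1"
begin

definition A where "A x = integral {-r-1..x} u"
definition B where "B x = integral {-r-1..x} (\<lambda>y. y * u y)"
definition f where "f = abs_conv u"
definition f1 where "f1 x = 2 * A x - 1"

lemma sp_r: "u y \<noteq> 0 \<Longrightarrow> -r < y \<and> y < r"
  using supp[of y] by (simp add: abs_less_iff)

lemma sp_le: "u y \<noteq> 0 \<Longrightarrow> -r \<le> y \<and> y \<le> r"
  using sp_r[of y] by auto

lemma sp_z: "y \<le> -r \<or> y \<ge> r \<Longrightarrow> u y = 0"
  using sp_r[of y] by linarith

lemma ycont: "continuous_on UNIV (\<lambda>y. y * u y)"
  using ucont by (intro continuous_intros)

lemma u_int: "integrable lborel u" "(LINT y|lborel. u y) = integral {-r..r} u"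
  using supp_int[OF ucont sp_le] by auto

lemma yu_int: "integrable lborel (\<lambda>y. y * u y)"
proof (rule supp_int(1)[OF ycont, of "-r" r])
  fix y assume "y * u y \<noteq> 0" then show "-r \<le> y \<and> y \<le> r" using sp_le[of y] by auto
qed

lemma yu_zero: "(LINT y|lborel. y * u y) = 0"
proof -
  have "(LINT y|lborel. y * u y) = \<bar>-1\<bar> *\<^sub>R (LINT y|lborel. (0 + -1 * y) * u (0 + -1 * y))"
    by (rule lborel_integral_real_affine) simp
  also have "\<dots> = - (LINT y|lborel. y * u y)" by (simp add: ueven)
  finally show ?thesis by simp
qed

lemma A_deriv: "(A has_real_derivative u x) (at x)"
  unfolding A_def[abs_def] by (rule FTCa[OF ucont]) (rule sp_z, simp)

lemma B_deriv: "(B has_real_derivative x * u x) (at x)"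
  unfolding B_def[abs_def] by (rule FTCa[OF ycont]) (simp add: sp_z)

end

context Uctx begin
lemma f_formula: "f x = - x + 2 * (x * A x - B x)"
proof -
  have ab: "\<bar>x - y\<bar> * u y = (y - x) * u y + 2 * (max (x - y) 0 * u y)" for y
    by (simp add: max_def algebra_simps)
  have cm: "continuous_on UNIV (\<lambda>y. max (x - y) 0 * u y)"
    using ucont by (intro continuous_intros)
  have i1: "integrable lborel (\<lambda>y. (y - x) * u y)"
    using yu_int u_int(1) by (simp add: left_diff_distrib)
  have S: "(LINT y|lborel. max (x - y) 0 * u y) = x * A x - B x"
  proof (cases "x \<ge> -r-1")
    case True
    have "(LINT y|lborel. max (x - y) 0 * u y) = integral {-r-1..x} (\<lambda>y. max (x - y) 0 * u y)"
    proof (rule supp_int(2)[OF cm])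
      fix y assume "max (x - y) 0 * u y \<noteq> 0"
      then show "-r-1 \<le> y \<and> y \<le> x" using sp_r[of y] by (cases "y \<le> x") (auto simp: max_def)
    qed
    also have "\<dots> = integral {-r-1..x} (\<lambda>y. x * u y - y * u y)"
      by (rule integral_cong) (auto simp: max_def algebra_simps)
    also have "\<dots> = x * A x - B x"
      unfolding A_def B_def
      by (subst integral_diff) (auto intro!: integrable_continuous_interval continuous_intros
          continuous_on_subset[OF ucont] continuous_on_subset[OF ycont])
    finally show ?thesis .
  next
    case False
    have "(\<lambda>y. max (x - y) 0 * u y) = (\<lambda>y. 0)"
    proof
      fix y show "max (x - y) 0 * u y = 0"
        using supp[of y] False by (cases "u y = 0") (auto simp: max_def)
    qed
    moreover have "A x = 0" "B x = 0" using False by (auto simp: A_def B_def)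
    ultimately show ?thesis by simp
  qed
  have i2: "integrable lborel (\<lambda>y. max (x - y) 0 * u y)"
  proof (rule supp_int(1)[OF cm, of "-r" r])
    fix y assume "max (x - y) 0 * u y \<noteq> 0"
    then show "-r \<le> y \<and> y \<le> r" using sp_r[of y] by (cases "u y = 0") auto
  qed
  have "f x = (LINT y|lborel. (y - x) * u y + 2 * (max (x - y) 0 * u y))"
    unfolding f_def abs_conv_def ab ..
  also have "\<dots> = (LINT y|lborel. (y - x) * u y) + 2 * (LINT y|lborel. max (x - y) 0 * u y)"
    using i1 i2 by simp
  also have "(LINT y|lborel. (y - x) * u y) = - x"
    using yu_int u_int(1) yu_zero uint by (simp add: left_diff_distrib)
  finally show ?thesis using S by simp
qed

end

context Uctx begin
lemma f_deriv: "(f has_real_derivative f1 x) (at x)"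
proof -
  have "f = (\<lambda>x. - x + 2 * (x * A x - B x))" using f_formula by auto
  moreover have "((\<lambda>x. - x + 2 * (x * A x - B x)) has_real_derivative
       - 1 + 2 * ((1 * A x + x * u x) - x * u x)) (at x)"
    by (auto intro!: derivative_eq_intros A_deriv B_deriv)
  ultimately show ?thesis by (simp add: f1_def)
qed

lemma f1_deriv: "(f1 has_real_derivative 2 * u x) (at x)"
  unfolding f1_def[abs_def] by (auto intro!: derivative_eq_intros A_deriv)

lemma A_mono: "x \<le> y \<Longrightarrow> A x \<le> A y"
proof (rule DERIV_nonneg_imp_nondecreasing[of x y A])
  fix z show "\<exists>y. DERIV A z :> y \<and> y \<ge> 0" using A_deriv[of z] unn[of z] by blast
qed

lemma A_one: "x \<ge> r \<Longrightarrow> A x = 1"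
proof -
  assume x: "x \<ge> r"
  have "(LINT y|lborel. u y) = integral {-r-1..x} u"
  proof (rule supp_int(2)[OF ucont])
    fix y assume "u y \<noteq> 0" then show "-r-1 \<le> y \<and> y \<le> x" using sp_le[of y] x by auto
  qed
  then show ?thesis using uint by (simp add: A_def)
qed

lemma A_zero: "x \<le> -r \<Longrightarrow> A x = 0"
proof -
  assume x: "x \<le> -r"
  show ?thesis unfolding A_def
    by (rule integral_unique[OF has_integral_is_0]) (use sp_z x in auto)
qed

lemma B_zero: "x \<ge> r \<Longrightarrow> B x = 0"
proof -
  assume x: "x \<ge> r"
  have "(LINT y|lborel. y * u y) = integral {-r-1..x} (\<lambda>y. y * u y)"
  proof (rule supp_int(2)[OF ycont])
    fix y assume "y * u y \<noteq> 0" then show "-r-1 \<le> y \<and> y \<le> x" using sp_le[of y] x by auto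
  qed
  then show ?thesis using yu_zero by (simp add: B_def)
qed

lemma A_bounds: "0 \<le> A x" "A x \<le> 1"
proof -
  show "0 \<le> A x" using A_mono[of "min x (-r)" x] A_zero[of "min x (-r)"] by simp
  show "A x \<le> 1" using A_mono[of x "max x r"] A_one[of "max x r"] by simp
qed

lemma f1_bound: "\<bar>f1 x\<bar> \<le> 1" using A_bounds[of x] by (simp add: f1_def)

lemma f1_mono: "x \<le> y \<Longrightarrow> f1 x \<le> f1 y" using A_mono by (simp add: f1_def)

lemma f1_cont: "continuous_on UNIV f1"
  using f1_deriv by (meson DERIV_isCont continuous_at_imp_continuous_on)

lemma f_cont: "continuous_on UNIV f"
  using f_deriv by (meson DERIV_isCont continuous_at_imp_continuous_on)

lemma f_even: "f (- x) = f x"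
proof -
  have e1: "(LBINT y. \<bar>x - y\<bar> * u y) = \<bar>-1\<bar> *\<^sub>R (LBINT y. \<bar>x - (0 + -1 * y)\<bar> * u (0 + -1 * y))"
    by (rule lborel_integral_real_affine) simp
  have e2: "(\<lambda>y. \<bar>x - (0 + -1 * y)\<bar> * u (0 + -1 * y)) = (\<lambda>y. \<bar>-x - y\<bar> * u y)"
  proof (rule ext)
    fix y
    have "\<bar>x - (0 + -1 * y)\<bar> = \<bar>-x - y\<bar>" by arith
    moreover have "u (0 + -1 * y) = u y" using ueven[of y] by simp
    ultimately show "\<bar>x - (0 + -1 * y)\<bar> * u (0 + -1 * y) = \<bar>-x - y\<bar> * u y" by simp
  qed
  show ?thesis using e1 unfolding e2 f_def abs_conv_def by simp
qed

lemma f_convex: "convex_on UNIV f"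
  by (rule convex_on_realI[OF connected_UNIV f_deriv f1_mono]) auto

lemma f_ge_f0: "f 0 \<le> f x"
proof -
  have "f ((1 - 1/2) *\<^sub>R x + (1/2) *\<^sub>R (-x)) \<le> (1 - 1/2) * f x + (1/2) * f (-x)"
    by (rule convex_onD[OF f_convex]) auto
  then show ?thesis by (simp add: f_even)
qed

lemma f0_pos: "f 0 > 0"
proof -
  have cm: "continuous_on UNIV (\<lambda>y. \<bar>y\<bar> * u y)" using ucont by (intro continuous_intros)
  have i: "integrable lborel (\<lambda>y. \<bar>y\<bar> * u y)"
  proof (rule supp_int(1)[OF cm, of "-r" r])
    fix y assume "\<bar>y\<bar> * u y \<noteq> 0" then show "-r \<le> y \<and> y \<le> r" using sp_le[of y] by auto
  qed
  have nn: "0 \<le> f 0" unfolding f_def abs_conv_def by (intro integral_nonneg_AE AE_I2) (simp add: unn)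
  show ?thesis
  proof (rule ccontr)
    assume "\<not> f 0 > 0"
    then have "(LINT y|lborel. \<bar>y\<bar> * u y) = 0" using nn unfolding f_def abs_conv_def by simp
    then have "AE y in lborel. \<bar>y\<bar> * u y = 0"
      using integral_nonneg_eq_0_iff_AE[OF i] unn by (simp add: AE_I2)
    then have "AE y in lborel. u y = 0"
      using AE_lborel_singleton[of 0] by eventually_elim simp
    then have "(LINT y|lborel. u y) = 0"
      by (rule integral_eq_zero_AE)
    then show False using uint by simp
  qed
qed

lemma f_abs: "\<bar>x\<bar> \<ge> r \<Longrightarrow> f x = \<bar>x\<bar>"
proof -
  have pos: "f y = y" if "y \<ge> r" for y
    using that A_one B_zero f_formula[of y] by simp
  assume "\<bar>x\<bar> \<ge> r"
  then show ?thesis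
  proof (cases "x \<ge> 0")
    case True then show ?thesis using pos[of x] \<open>\<bar>x\<bar> \<ge> r\<close> by simp
  next
    case False then show ?thesis using pos[of "-x"] \<open>\<bar>x\<bar> \<ge> r\<close> f_even[of x] by simp
  qed
qed

end

lemma const_eq:
  assumes d: "d \<ge> 2"
  shows "C_const d = c_const d / (real d - 1)" "c_const d > 0"
proof -
  define z where "z = (real d - 1) / 2"
  have z: "z > 0" using d by (simp add: z_def)
  have zn: "z \<notin> \<int>\<^sub>\<le>\<^sub>0" using z nonpos_Ints_nonpos by force
  have g1: "Gamma ((real d + 1) / 2) = z * Gamma z"
  proof -
    have "z + 1 = (real d + 1) / 2" by (simp add: z_def field_simps)
    then show ?thesis using Gamma_plus1[OF zn] by metis
  qed
  have p: "pi powr (real d / 2) = pi powr z * sqrt pi"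
  proof -
    have e: "real d / 2 = z + 1/2" by (simp add: z_def field_simps)
    show ?thesis unfolding e by (simp add: powr_add powr_half_sqrt)
  qed
  have w1: "wsph (2 * z) = 2 * pi powr z / Gamma z" by (simp add: wsph_def)
  have w2: "wsph (real d) = 2 * pi powr z * sqrt pi / Gamma (real d / 2)" by (simp add: wsph_def p)
  have Gz: "Gamma z > 0" using z by simp
  have Gd: "Gamma (real d / 2) > 0" using d by simp
  have pz: "pi powr z > 0" by simp
  have sp: "sqrt pi > 0" by simp
  have dz: "real d - 1 = 2 * z" by (simp add: z_def)
  show "c_const d > 0" unfolding c_const_def dz w1 w2 using Gz Gd pz sp z by simp
  show "C_const d = c_const d / (real d - 1)"
    unfolding C_const_def c_const_def dz w1 w2 g1 using Gz Gd pz sp z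
    by (simp add: field_simps)
qed

locale Fctx = Uctx +
  fixes d :: nat and n :: nat
  assumes d2: "d \<ge> 2" and uCk: "Ck n u"
begin

definition gf :: "nat \<Rightarrow> real \<Rightarrow> real" where
  "gf j = (if j = 0 then f else if j = 1 then f1 else (\<lambda>x. 2 * (deriv ^^ (j - 2)) u x))"

lemma gf_chain: "dchain (n + 2) gf"
proof -
  have uc: "dchain n (\<lambda>j. (deriv ^^ j) u)" by (rule Ck_dchain[OF uCk])
  show ?thesis unfolding dchain_def
  proof (intro conjI allI impI)
    fix j x assume j: "j < n + 2"
    show "(gf j has_real_derivative gf (Suc j) x) (at x)"
    proof (cases "j \<le> 1")
      case True
      then consider "j = 0" | "j = 1" by linarith
      then show ?thesis
      proof cases
        case 1 then show ?thesis using f_deriv by (simp add: gf_def)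
      next
        case 2 then show ?thesis using f1_deriv by (simp add: gf_def)
      qed
    next
      case False
      then have "j - 2 < n" using j by simp
      then have "((deriv ^^ (j - 2)) u has_real_derivative (deriv ^^ Suc (j - 2)) u x) (at x)"
        using uc unfolding dchain_def by blast
      then have "((\<lambda>x. 2 * (deriv ^^ (j - 2)) u x) has_real_derivative 2 * (deriv ^^ Suc (j - 2)) u x) (at x)"
        by (rule DERIV_cmult)
      moreover have "Suc (j - 2) = Suc j - 2" using False by simp
      ultimately show ?thesis using False by (simp add: gf_def)
    qed
  next
    fix j assume j: "j \<le> n + 2"
    show "continuous_on UNIV (gf j)"
    proof (cases "j \<le> 1")
      case True
      then consider "j = 0" | "j = 1" by linarith
      then show ?thesis
        by cases (simp_all add: gf_def f_cont f1_cont)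
    next
      case False
      then have "j - 2 \<le> n" using j by simp
      then have "continuous_on UNIV ((deriv ^^ (j - 2)) u)" using uc unfolding dchain_def by blast
      then show ?thesis using False by (simp add: gf_def continuous_intros)
    qed
  qed
qed

definition c where "c = c_const d"
definition gF :: "nat \<Rightarrow> real \<Rightarrow> real" where
  "gF j s = c * (LINT t:{0..1}|lborel. gf j (t * s) * (t ^ j * wt d t))"

lemma gF_chain: "dchain (n + 2) gF"
  unfolding gF_def[abs_def] by (rule dchain_PI[OF gf_chain wt_int[OF d2]])

definition F where "F = I_op d f"

lemma F_eq: "F = gF 0"
  by (auto simp: fun_eq_iff F_def I_op_def gF_def gf_def wt_def c_def)

lemma c_pos: "c > 0" using const_eq(2)[OF d2] by (simp add: c_def)
lemma C_eq: "C_const d = c / (real d - 1)" using const_eq(1)[OF d2] by (simp add: c_def)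

lemma F_Ck: "Ck (n + 2) F" using dchain_Ck[OF gF_chain] F_eq by simp

lemma F_deriv: "(F has_real_derivative gF 1 s) (at s)"
  using gF_chain F_eq unfolding dchain_def by auto

lemma F_cont: "continuous_on UNIV F"
  using gF_chain F_eq unfolding dchain_def by auto

lemma gF1_cont: "continuous_on UNIV (gF 1)"
  using gF_chain unfolding dchain_def by auto

lemma gF1_eq: "gF 1 s = c * (LINT t:{0..1}|lborel. f1 (t * s) * (t * wt d t))"
  by (simp add: gF_def gf_def)

lemma tw: "set_integrable lborel {0..1} (\<lambda>t. t * wt d t)"
  "(LINT t:{0..1}|lborel. t * wt d t) = 1 / (real d - 1)"
  using tw_int[OF d2] by auto

lemma gF1_bound: "\<bar>gF 1 s\<bar> \<le> c / (real d - 1)"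
proof -
  have "\<bar>LINT t:{0..1}|lborel. f1 (t * s) * (t * wt d t)\<bar> \<le> (LINT t:{0..1}|lborel. t * wt d t)"
  proof (rule set_int_abs_bound)
    show "set_integrable lborel {0..1} (\<lambda>t. f1 (t * s) * (t * wt d t))"
      by (rule PI_int[OF f1_cont tw(1)])
    show "set_integrable lborel {0..1} (\<lambda>t. t * wt d t)" by (rule tw(1))
    fix t :: real assume t: "t \<in> {0..1}"
    have "0 \<le> t * wt d t" using t wt_nonneg by simp
    then have "\<bar>f1 (t * s) * (t * wt d t)\<bar> = \<bar>f1 (t * s)\<bar> * (t * wt d t)"
      by (metis abs_mult abs_of_nonneg)
    also have "\<dots> \<le> 1 * (t * wt d t)"
      by (rule mult_right_mono[OF f1_bound]) (use \<open>0 \<le> t * wt d t\<close> in simp)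
    finally show "\<bar>f1 (t * s) * (t * wt d t)\<bar> \<le> t * wt d t" by simp
  qed
  then show ?thesis unfolding gF1_eq tw(2) using c_pos by (simp add: abs_mult divide_inverse mult_left_mono)
qed

lemma deriv_F: "deriv F = gF 1"
  using F_deriv by (auto simp: fun_eq_iff intro: DERIV_imp_deriv)

lemma F_even: "F (- s) = F s"
  by (simp add: F_def I_op_def f_even[of "_ * s", symmetric])

lemma gF1_mono: "s \<le> s' \<Longrightarrow> gF 1 s \<le> gF 1 s'"
proof -
  assume ss: "s \<le> s'"
  have "(LINT t:{0..1}|lborel. f1 (t * s) * (t * wt d t)) \<le> (LINT t:{0..1}|lborel. f1 (t * s') * (t * wt d t))"
  proof (rule set_integral_mono)
    show "set_integrable lborel {0..1} (\<lambda>t. f1 (t * s) * (t * wt d t))"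
      by (rule PI_int[OF f1_cont tw(1)])
    show "set_integrable lborel {0..1} (\<lambda>t. f1 (t * s') * (t * wt d t))"
      by (rule PI_int[OF f1_cont tw(1)])
    fix t :: real assume t: "t \<in> {0..1}"
    have "0 \<le> t * wt d t" using t wt_nonneg by simp
    moreover have "f1 (t * s) \<le> f1 (t * s')" using t ss by (intro f1_mono mult_left_mono) auto
    ultimately show "f1 (t * s) * (t * wt d t) \<le> f1 (t * s') * (t * wt d t)"
      by (rule mult_right_mono[rotated])
  qed
  then show ?thesis unfolding gF1_eq using c_pos by (intro mult_left_mono) auto
qed

lemma F_convex: "convex_on UNIV F"
  by (rule convex_on_realI[OF connected_UNIV F_deriv gF1_mono]) auto

lemma F_pos: "F s > 0"
proof -
  have wi: "set_integrable lborel {0..1} (wt d)" by (rule wt_int[OF d2])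
  have W: "1 / (real d - 1) \<le> (LINT t:{0..1}|lborel. wt d t)"
    unfolding tw(2)[symmetric]
    by (rule set_integral_mono[OF tw(1) wi]) (auto simp: wt_nonneg mult_left_le_one_le)
  have Wp: "0 < (LINT t:{0..1}|lborel. wt d t)"
    using d2 by (intro less_le_trans[OF _ W]) simp
  have "(LINT t:{0..1}|lborel. f 0 * wt d t) \<le> (LINT t:{0..1}|lborel. f (t * s) * wt d t)"
  proof (rule set_integral_mono)
    show "set_integrable lborel {0..1} (\<lambda>t. f 0 * wt d t)" using wi by simp
    show "set_integrable lborel {0..1} (\<lambda>t. f (t * s) * wt d t)"
      by (rule PI_int[OF f_cont wi])
    fix t :: real assume "t \<in> {0..1}"
    show "f 0 * wt d t \<le> f (t * s) * wt d t"
      by (rule mult_right_mono[OF f_ge_f0 wt_nonneg])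
  qed
  moreover have "0 < (LINT t:{0..1}|lborel. f 0 * wt d t)"
    using f0_pos Wp by simp
  ultimately have "0 < (LINT t:{0..1}|lborel. f (t * s) * wt d t)" by linarith
  then show ?thesis using c_pos by (simp add: F_def I_op_def wt_def c_def)
qed

lemma deriv_F0: "deriv F 0 = 0"
proof -
  have "((\<lambda>s. F (- s)) has_real_derivative gF 1 (- 0) * (- 1)) (at 0)"
    by (rule DERIV_chain2[OF F_deriv]) (auto intro!: derivative_eq_intros)
  then have "(F has_real_derivative - gF 1 0) (at 0)" by (simp add: F_even)
  then have "- gF 1 0 = gF 1 0" using F_deriv[of 0] by (rule DERIV_unique)
  then show ?thesis by (simp add: deriv_F)
qed

end

lemma hk_to_lborel_gen:
  fixes f :: "real \<Rightarrow> real"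
  assumes I: "(f has_integral I) S" and nn: "\<And>x. x \<in> S \<Longrightarrow> f x \<ge> 0"
    and m: "f \<in> borel_measurable borel" and S: "S \<in> sets borel"
  shows "set_integrable lborel S f"
proof -
  have ai: "f absolutely_integrable_on S"
    using I nn by (intro nonnegative_absolutely_integrable_1) (auto simp: integrable_on_def)
  have mm: "(\<lambda>x. indicator S x *\<^sub>R f x) \<in> borel_measurable lborel"
    using m S by measurable
  show si: "set_integrable lborel S f"
    using ai integrable_completion[OF mm] unfolding set_integrable_def by simp
qed

lemma tail_int:
  fixes R :: real assumes R: "R > 0"
  shows "integrable lborel (\<lambda>x. indicator {R..} x * x powr (-2))"
proof -
  have "((\<lambda>x. x powr (-2)) has_integral -(R powr (-2+1)) / (-2+1)) {R..}"
    by (rule has_integral_powr_to_inf) (use R in auto)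
  then have "set_integrable lborel {R..} (\<lambda>x. x powr (-2))"
    by (rule hk_to_lborel_gen) auto
  then show ?thesis unfolding set_integrable_def by simp
qed

context Fctx begin

definition h where "h x = f x - \<bar>x\<bar>"
definition G where "G s = F s - C_const d * \<bar>s\<bar>"

lemma h_cont: "continuous_on UNIV h"
  unfolding h_def[abs_def] using f_cont by (intro continuous_intros)

lemma h_zero: "\<bar>x\<bar> \<ge> r \<Longrightarrow> h x = 0"
  using f_abs by (simp add: h_def)

lemma h_bound: obtains M where "M \<ge> 0" "\<And>x. \<bar>h x\<bar> \<le> M"
proof -
  have "compact (h ` {-r..r})"
    by (rule compact_continuous_image[OF continuous_on_subset[OF h_cont]]) auto
  then have "bounded (h ` {-r..r})" by (rule compact_imp_bounded)
  then obtain M where M: "\<forall>x\<in>{-r..r}. \<bar>h x\<bar> \<le> M" unfolding bounded_iff by auto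
  have "\<bar>h x\<bar> \<le> max M 0" for x
  proof (cases "\<bar>x\<bar> \<ge> r")
    case True then show ?thesis using h_zero by simp
  next
    case False then have "x \<in> {-r..r}" by auto
    then show ?thesis using M by fastforce
  qed
  then show ?thesis using that[of "max M 0"] by simp
qed

lemma G_repr:
  assumes s: "s \<ge> 0"
  shows "G s = c * (LINT t:{0..1}|lborel. h (t * s) * wt d t)"
proof -
  have wi: "set_integrable lborel {0..1} (wt d)" by (rule wt_int[OF d2])
  have i1: "set_integrable lborel {0..1} (\<lambda>t. f (t * s) * wt d t)" by (rule PI_int[OF f_cont wi])
  have i2: "set_integrable lborel {0..1} (\<lambda>t. s * (t * wt d t))" using tw(1) by simp
  have "(LINT t:{0..1}|lborel. h (t * s) * wt d t) = (LINT t:{0..1}|lborel. f (t * s) * wt d t - s * (t * wt d t))"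
    by (rule set_lebesgue_integral_cong) (use s in \<open>auto simp: h_def algebra_simps\<close>)
  also have "\<dots> = (LINT t:{0..1}|lborel. f (t * s) * wt d t) - s / (real d - 1)"
    using i1 i2 by (simp add: set_integral_diff(2) tw(2))
  finally have "c * (LINT t:{0..1}|lborel. h (t * s) * wt d t) = c * (LINT t:{0..1}|lborel. f (t * s) * wt d t) - c * (s / (real d - 1))"
    by (simp only: right_diff_distrib)
  also have "\<dots> = G s" using s by (simp add: G_def F_def I_op_def wt_def c_def C_eq)
  finally show ?thesis ..
qed

lemma G_even: "G (- s) = G s" by (simp add: G_def F_even)

lemma G_cont: "continuous_on UNIV G"
  unfolding G_def[abs_def] using F_cont by (intro continuous_intros)

lemma G_decay: obtains K where "K \<ge> 0" "\<And>s. \<bar>s\<bar> \<ge> 2 * r \<Longrightarrow> \<bar>G s\<bar> \<le> K / \<bar>s\<bar>"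
proof -
  obtain M where M0: "M \<ge> 0" and M: "\<And>x. \<bar>h x\<bar> \<le> M" using h_bound by blast
  have pos: "\<bar>G s\<bar> \<le> (c * (2 * M * r)) / s" if s: "s \<ge> 2 * r" for s
  proof -
    have s0: "s > 0" using s rpos by simp
    define q where "q = r / s"
    have q: "0 \<le> q" "q \<le> 1/2" using s0 s rpos by (auto simp: q_def field_simps)
    have ki: "set_integrable lborel {0..q} (\<lambda>t. 2 * M)"
      by (rule borel_integrable_atLeastAtMost') simp
    have ki2: "set_integrable lborel {0..1} (\<lambda>t. indicator {0..q} t * (2 * M))"
    proof -
      have "(\<lambda>t. indicator {0..1} t *\<^sub>R (indicator {0..q} t * (2 * M))) = (\<lambda>t. indicator {0..q} t *\<^sub>R (2 * M))"
        using q by (auto simp: fun_eq_iff split: split_indicator)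
      then show ?thesis using ki unfolding set_integrable_def by simp
    qed
    have kv: "(LINT t:{0..1}|lborel. indicator {0..q} t * (2 * M)) = 2 * M * q"
    proof -
      have "(LINT t:{0..1}|lborel. indicator {0..q} t * (2 * M)) = (LINT t:{0..q}|lborel. 2 * M)"
        unfolding set_lebesgue_integral_def
        using q by (intro Bochner_Integration.integral_cong) (auto split: split_indicator)
      also have "\<dots> = integral {0..q} (\<lambda>t. 2 * M)" by (rule set_borel_integral_eq_integral(2)[OF ki])
      also have "\<dots> = 2 * M * q" using q by simp
      finally show ?thesis .
    qed
    have "\<bar>LINT t:{0..1}|lborel. h (t * s) * wt d t\<bar> \<le> (LINT t:{0..1}|lborel. indicator {0..q} t * (2 * M))"
    proof (rule set_int_abs_bound)
      show "set_integrable lborel {0..1} (\<lambda>t. h (t * s) * wt d t)" by (rule PI_int[OF h_cont wt_int[OF d2]])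
      show "set_integrable lborel {0..1} (\<lambda>t. indicator {0..q} t * (2 * M))" by (rule ki2)
      fix t :: real assume t: "t \<in> {0..1}"
      show "\<bar>h (t * s) * wt d t\<bar> \<le> indicator {0..q} t * (2 * M)"
      proof (cases "t \<le> q")
        case True
        then have "wt d t \<le> 2" using wt_le2[OF d2, of t] t q by simp
        then have "\<bar>h (t * s)\<bar> * wt d t \<le> M * 2"
          using M[of "t * s"] wt_nonneg[of d t] M0 by (intro mult_mono) auto
        then show ?thesis using True t by (simp add: abs_mult wt_nonneg abs_of_nonneg)
      next
        case False
        then have "t * s \<ge> r" using s0 by (simp add: q_def field_simps)
        then have "h (t * s) = 0" using h_zero[of "t * s"] by simp
        then show ?thesis using M0 by (simp add: indicator_def)
      qed
    qed
    then have X: "\<bar>LINT t:{0..1}|lborel. h (t * s) * wt d t\<bar> \<le> 2 * M * q" unfolding kv .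
    have "\<bar>G s\<bar> = c * \<bar>LINT t:{0..1}|lborel. h (t * s) * wt d t\<bar>"
      using G_repr[of s] s0 c_pos by (simp add: abs_mult)
    also have "\<dots> \<le> c * (2 * M * q)" using X c_pos by (intro mult_left_mono) auto
    finally have "\<bar>G s\<bar> \<le> c * (2 * M * q)" .
    then show ?thesis by (simp add: q_def)
  qed
  show ?thesis
  proof (rule that[of "c * (2 * M * r)"])
    show "0 \<le> c * (2 * M * r)" using c_pos M0 rpos by simp
    fix s :: real assume s: "\<bar>s\<bar> \<ge> 2 * r"
    show "\<bar>G s\<bar> \<le> c * (2 * M * r) / \<bar>s\<bar>"
    proof (cases "s \<ge> 0")
      case True then show ?thesis using pos[of s] s by simp
    next
      case False then show ?thesis using pos[of "-s"] s G_even[of s] by simp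
    qed
  qed
qed

end

context Fctx begin

lemma G_bounded: obtains B where "B \<ge> 0" "\<And>s. \<bar>G s\<bar> \<le> B"
proof -
  obtain K where K0: "K \<ge> 0" and K: "\<And>s. \<bar>s\<bar> \<ge> 2 * r \<Longrightarrow> \<bar>G s\<bar> \<le> K / \<bar>s\<bar>"
    using G_decay by blast
  have "compact (G ` {-2*r..2*r})"
    by (rule compact_continuous_image[OF continuous_on_subset[OF G_cont]]) auto
  then have "bounded (G ` {-2*r..2*r})" by (rule compact_imp_bounded)
  then obtain M where M: "\<forall>x\<in>{-2*r..2*r}. \<bar>G x\<bar> \<le> M" unfolding bounded_iff by auto
  have "\<bar>G s\<bar> \<le> max M (K / (2 * r))" for s
  proof (cases "\<bar>s\<bar> \<ge> 2 * r")
    case True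
    have "K / \<bar>s\<bar> \<le> K / (2 * r)" using True rpos K0 by (intro divide_left_mono) auto
    then show ?thesis using K[OF True] by simp
  next
    case False then have "s \<in> {-2*r..2*r}" by auto
    then show ?thesis using M by fastforce
  qed
  moreover have "max M (K / (2 * r)) \<ge> 0" using K0 rpos by (auto simp: le_max_iff_disj)
  ultimately show ?thesis using that by blast
qed

lemma G2_int: "integrable lborel (\<lambda>s. (G s)\<^sup>2)"
proof -
  obtain K where K0: "K \<ge> 0" and K: "\<And>s. \<bar>s\<bar> \<ge> 2 * r \<Longrightarrow> \<bar>G s\<bar> \<le> K / \<bar>s\<bar>"
    using G_decay by blast
  obtain B where B0: "B \<ge> 0" and B: "\<And>s. \<bar>G s\<bar> \<le> B" using G_bounded by blast
  define R where "R = 2 * r"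
  have R: "R > 0" using rpos by (simp add: R_def)
  define D where "D s = B\<^sup>2 * indicator {-R..R} s + K\<^sup>2 * (indicator {R..} s * s powr (-2))
      + K\<^sup>2 * (indicator {R..} (-s) * (-s) powr (-2))" for s
  have t1: "integrable lborel (\<lambda>s. indicator {R..} s * s powr (-2))" by (rule tail_int[OF R])
  have t2: "integrable lborel (\<lambda>s. indicator {R..} (-s) * (-s) powr (-2))"
    using lborel_integrable_real_affine[OF t1, of "-1" 0] by simp
  have t0: "integrable lborel (\<lambda>s. B\<^sup>2 * indicator {-R..R} s)"
    using borel_integrable_atLeastAtMost[of "-R" R "\<lambda>_. B\<^sup>2"] by simp
  have Di: "integrable lborel D" unfolding D_def[abs_def] using t0 t1 t2 by simp
  have pw: "(G s)\<^sup>2 \<le> D s \<and> 0 \<le> D s" for s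
  proof -
    have nn: "0 \<le> K\<^sup>2 * (indicator {R..} s * s powr (-2))" "0 \<le> K\<^sup>2 * (indicator {R..} (-s) * (-s) powr (-2))"
      "0 \<le> B\<^sup>2 * indicator {-R..R} s"
      by (auto simp: indicator_def)
    have sq: "(G s)\<^sup>2 \<le> (K / \<bar>s\<bar>)\<^sup>2" if "\<bar>s\<bar> \<ge> R"
    proof -
      have "\<bar>G s\<bar> \<le> K / \<bar>s\<bar>" using K that by (simp add: R_def)
      then have "\<bar>G s\<bar>\<^sup>2 \<le> (K / \<bar>s\<bar>)\<^sup>2" by (intro power_mono) auto
      then show ?thesis by simp
    qed
    have pw2: "x powr (-2) = (1 / x)\<^sup>2" if "x > 0" for x :: real
      using that by (simp add: powr_minus power_one_over powr_numeral inverse_eq_divide)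
    have "(G s)\<^sup>2 \<le> D s"
    proof (cases "\<bar>s\<bar> \<le> R")
      case True
      have "(G s)\<^sup>2 \<le> B\<^sup>2" using B[of s] abs_le_square_iff by (metis abs_of_nonneg B0)
      moreover have i: "indicator {-R..R} s = (1::real)" using True by (auto simp: indicator_def abs_le_iff)
      ultimately show ?thesis using nn unfolding D_def i by linarith
    next
      case False
      show ?thesis
      proof (cases "s \<ge> 0")
        case True
        then have s: "s \<ge> R" "s > 0" using False R by auto
        have "(G s)\<^sup>2 \<le> K\<^sup>2 * s powr (-2)" using sq s by (simp add: pw2 power_divide)
        moreover have i: "indicator {R..} s = (1::real)" using s by (auto simp: indicator_def)
        ultimately show ?thesis using nn unfolding D_def i by linarith
      next
        case neg: False
        then have s: "-s \<ge> R" "-s > 0" using False R by auto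
        have "(G s)\<^sup>2 \<le> K\<^sup>2 * (-s) powr (-2)" using sq s by (simp add: pw2 power_divide)
        moreover have i: "indicator {R..} (-s) = (1::real)" using s by (auto simp: indicator_def)
        ultimately show ?thesis using nn unfolding D_def i by linarith
      qed
    qed
    moreover have "0 \<le> D s" using nn unfolding D_def by linarith
    ultimately show ?thesis by simp
  qed
  show ?thesis
  proof (rule Bochner_Integration.integrable_bound[OF Di])
    show "(\<lambda>s. (G s)\<^sup>2) \<in> borel_measurable lborel"
    proof -
      have Gm: "G \<in> borel_measurable lborel" using borel_measurable_continuous_onI[OF G_cont] by simp
      then show ?thesis by measurable
    qed
    show "AE x in lborel. norm ((G x)\<^sup>2) \<le> norm (D x)"
      using pw by (intro AE_I2) simp
  qed
qed

lemma abs_conv_scale: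
  assumes e: "\<epsilon> > 0"
  shows "abs_conv (\<lambda>x. u (x / \<epsilon>) / \<epsilon>) x = \<epsilon> * f (x / \<epsilon>)"
proof -
  have "abs_conv (\<lambda>x. u (x / \<epsilon>) / \<epsilon>) x
      = \<bar>\<epsilon>\<bar> *\<^sub>R (LBINT z. \<bar>x - (0 + \<epsilon> * z)\<bar> * (u ((0 + \<epsilon> * z) / \<epsilon>) / \<epsilon>))"
    unfolding abs_conv_def by (rule lborel_integral_real_affine) (use e in simp)
  also have "(\<lambda>z. \<bar>x - (0 + \<epsilon> * z)\<bar> * (u ((0 + \<epsilon> * z) / \<epsilon>) / \<epsilon>)) = (\<lambda>z. \<bar>x / \<epsilon> - z\<bar> * u z)"
  proof (rule ext)
    fix z
    have "\<bar>x - \<epsilon> * z\<bar> = \<epsilon> * \<bar>x / \<epsilon> - z\<bar>"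
    proof -
      have "x - \<epsilon> * z = \<epsilon> * (x / \<epsilon> - z)" using e by (simp add: field_simps)
      then show ?thesis using e by (simp add: abs_mult)
    qed
    then show "\<bar>x - (0 + \<epsilon> * z)\<bar> * (u ((0 + \<epsilon> * z) / \<epsilon>) / \<epsilon>) = \<bar>x / \<epsilon> - z\<bar> * u z"
      using e by simp
  qed
  finally show ?thesis using e by (simp add: f_def abs_conv_def)
qed

lemma Fe_eq:
  assumes e: "\<epsilon> > 0"
  shows "I_op d (abs_conv (\<lambda>x. u (x / \<epsilon>) / \<epsilon>)) s = \<epsilon> * F (s / \<epsilon>)"
proof -
  have "I_op d (abs_conv (\<lambda>x. u (x / \<epsilon>) / \<epsilon>)) s
      = c_const d * (LINT t:{0..1}|lborel. \<epsilon> * (f (t * (s / \<epsilon>)) * (1 - t\<^sup>2) powr ((real d - 3) / 2)))"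
    unfolding I_op_def abs_conv_scale[OF e] by (simp add: mult.assoc)
  also have "\<dots> = \<epsilon> * F (s / \<epsilon>)"
    by (simp add: F_def I_op_def)
  finally show ?thesis .
qed

lemma diff_eq:
  assumes e: "\<epsilon> > 0"
  shows "I_op d (abs_conv (\<lambda>x. u (x / \<epsilon>) / \<epsilon>)) s - C_const d * \<bar>s\<bar> = \<epsilon> * G (s / \<epsilon>)"
proof -
  have "\<bar>s\<bar> = \<epsilon> * \<bar>s / \<epsilon>\<bar>" using e by (simp add: abs_divide)
  then show ?thesis using e by (simp add: Fe_eq G_def algebra_simps)
qed

end

theorem mainTheorem8:
  fixes n d :: nat and u :: "real \<Rightarrow> real" and F :: "real \<Rightarrow> real"
  assumes "d \<ge> 2" and "u \<in> U_class n"
    and "F = I_op d (abs_conv u)"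
  shows "(\<forall>s. F (- s) = F s)
    \<and> convex_on UNIV F
    \<and> (\<forall>s. F s > 0)
    \<and> Ck (n + 2) F
    \<and> (\<lambda>s. F s - C_const d * \<bar>s\<bar>) \<in> O[at_top](\<lambda>s. 1 / s)
    \<and> continuous_on UNIV (\<lambda>s. F s - C_const d * \<bar>s\<bar>)
    \<and> ((\<lambda>s. F s - C_const d * \<bar>s\<bar>) \<longlongrightarrow> 0) at_infinity
    \<and> integrable lborel (\<lambda>s. (F s - C_const d * \<bar>s\<bar>)\<^sup>2)
    \<and> bounded (range (deriv F)) \<and> continuous_on UNIV (deriv F) \<and> deriv F 0 = 0
    \<and> (\<forall>\<epsilon>>0. integrable lborel
          (\<lambda>s. (I_op d (abs_conv (\<lambda>x. u (x / \<epsilon>) / \<epsilon>)) s - C_const d * \<bar>s\<bar>)\<^sup>2))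
    \<and> ((\<lambda>\<epsilon>. sqrt (LINT s|lborel.
          (I_op d (abs_conv (\<lambda>x. u (x / \<epsilon>) / \<epsilon>)) s - C_const d * \<bar>s\<bar>)\<^sup>2))
        \<longlongrightarrow> 0) (at_right 0)
    \<and> (\<forall>s. ((\<lambda>\<epsilon>. I_op d (abs_conv (\<lambda>x. u (x / \<epsilon>) / \<epsilon>)) s)
        \<longlongrightarrow> C_const d * \<bar>s\<bar>) (at_right 0))"
proof -
  from assms(2) have uCk: "Ck n u" and cs: "compact (closure {x. u x \<noteq> 0})"
    and unn: "\<And>x. u x \<ge> 0" and ue: "\<And>x. u (- x) = u x" and ui: "(LINT x|lborel. u x) = 1"
    unfolding U_class_def mem_Collect_eq by blast+
  have "bounded (closure {x. u x \<noteq> 0})" using cs by (rule compact_imp_bounded)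
  then obtain r where r: "r > 0" and rb: "\<forall>x\<in>closure {x. u x \<noteq> 0}. norm x < r"
    unfolding bounded_pos_less by blast
  have supp: "\<bar>y\<bar> < r" if "u y \<noteq> 0" for y
  proof -
    have "y \<in> closure {x. u x \<noteq> 0}" using that closure_subset[of "{x. u x \<noteq> 0}"] by blast
    then show ?thesis using rb by auto
  qed
  have ucont: "continuous_on UNIV u"
  proof -
    have "continuous_on UNIV ((deriv ^^ 0) u)" using uCk unfolding Ck_def by blast
    then show ?thesis by simp
  qed
  interpret X: Fctx u r d n
  proof
    show "continuous_on UNIV u" by (rule ucont)
    show "0 < r" by (rule r)
    show "\<And>y. u y \<noteq> 0 \<Longrightarrow> \<bar>y\<bar> < r" by (rule supp)
    show "\<And>y. 0 \<le> u y" by (rule unn)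
    show "\<And>y. u (- y) = u y" by (rule ue)
    show "(LINT y|lborel. u y) = 1" by (rule ui)
    show "2 \<le> d" by (rule assms(1))
    show "Ck n u" by (rule uCk)
  qed
  have FF: "F = X.F" using assms(3) by (simp add: X.F_def X.f_def)
  have GG: "(\<lambda>s. F s - C_const d * \<bar>s\<bar>) = X.G" by (simp add: FF X.G_def[abs_def])
  obtain K where K0: "K \<ge> 0" and K: "\<And>s. \<bar>s\<bar> \<ge> 2 * r \<Longrightarrow> \<bar>X.G s\<bar> \<le> K / \<bar>s\<bar>"
    using X.G_decay by blast
  obtain B where B0: "B \<ge> 0" and B: "\<And>s. \<bar>X.G s\<bar> \<le> B" using X.G_bounded by blast
  have p1: "\<forall>s. F (- s) = F s" by (simp add: FF X.F_even)
  have p2: "convex_on UNIV F" by (simp add: FF X.F_convex)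
  have p3: "\<forall>s. F s > 0" by (simp add: FF X.F_pos)
  have p4: "Ck (n + 2) F" unfolding FF by (rule X.F_Ck)
  have p5: "X.G \<in> O[at_top](\<lambda>s. 1 / s)"
  proof (rule bigoI[of _ K])
    have "eventually (\<lambda>s. s \<ge> 2 * r) at_top" by (rule eventually_ge_at_top)
    then show "eventually (\<lambda>s. norm (X.G s) \<le> K * norm (1 / s)) at_top"
    proof eventually_elim
      case (elim s)
      then have "2 * r \<le> \<bar>s\<bar>" using r by simp
      then have "\<bar>X.G s\<bar> \<le> K / \<bar>s\<bar>" by (rule K)
      then show ?case by (simp add: abs_divide divide_inverse)
    qed
  qed
  have p7: "(X.G \<longlongrightarrow> 0) at_infinity"
  proof (rule Lim_null_comparison)
    show "eventually (\<lambda>s. norm (X.G s) \<le> K * norm (inverse s)) at_infinity"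
      unfolding eventually_at_infinity
    proof (intro exI allI impI)
      fix s :: real assume "2 * r \<le> norm s"
      then have "\<bar>X.G s\<bar> \<le> K / \<bar>s\<bar>" using K by simp
      then show "norm (X.G s) \<le> K * norm (inverse s)" by (simp add: divide_inverse)
    qed
    show "((\<lambda>s::real. K * norm (inverse s)) \<longlongrightarrow> 0) at_infinity"
      by (intro tendsto_mult_right_zero tendsto_norm_zero) (rule Limits.tendsto_inverse_0)
  qed
  have p9: "bounded (range (deriv F))"
    unfolding FF X.deriv_F bounded_iff using X.gF1_bound by auto
  have p10: "continuous_on UNIV (deriv F)" unfolding FF X.deriv_F by (rule X.gF1_cont)
  have p11: "deriv F 0 = 0" unfolding FF by (rule X.deriv_F0)
  have sc: "\<And>\<epsilon>. \<epsilon> > 0 \<Longrightarrow> (\<lambda>s. (I_op d (abs_conv (\<lambda>x. u (x / \<epsilon>) / \<epsilon>)) s - C_const d * \<bar>s\<bar>)\<^sup>2)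
        = (\<lambda>s. \<epsilon>\<^sup>2 * (X.G (0 + (1 / \<epsilon>) * s))\<^sup>2)"
    by (simp add: X.diff_eq power_mult_distrib)
  have p12: "\<forall>\<epsilon>>0. integrable lborel
          (\<lambda>s. (I_op d (abs_conv (\<lambda>x. u (x / \<epsilon>) / \<epsilon>)) s - C_const d * \<bar>s\<bar>)\<^sup>2)"
  proof (intro allI impI)
    fix \<epsilon> :: real assume e: "\<epsilon> > 0"
    have "integrable lborel (\<lambda>s. (X.G (0 + (1 / \<epsilon>) * s))\<^sup>2)"
      using lborel_integrable_real_affine[OF X.G2_int, of "1 / \<epsilon>" 0] e by simp
    then show "integrable lborel (\<lambda>s. (I_op d (abs_conv (\<lambda>x. u (x / \<epsilon>) / \<epsilon>)) s - C_const d * \<bar>s\<bar>)\<^sup>2)"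
      unfolding sc[OF e] by simp
  qed
  define I where "I = (LINT s|lborel. (X.G s)\<^sup>2)"
  have vals: "(LINT s|lborel. (I_op d (abs_conv (\<lambda>x. u (x / \<epsilon>) / \<epsilon>)) s - C_const d * \<bar>s\<bar>)\<^sup>2)
      = \<epsilon> ^ 3 * I" if e: "\<epsilon> > 0" for \<epsilon>
  proof -
    have "(LINT s|lborel. (X.G (0 + (1 / \<epsilon>) * s))\<^sup>2)
        = \<bar>\<epsilon>\<bar> *\<^sub>R (LINT x|lborel. (X.G (0 + (1 / \<epsilon>) * (0 + \<epsilon> * x)))\<^sup>2)"
      by (rule lborel_integral_real_affine) (use e in simp)
    also have "\<dots> = \<epsilon> * I" using e by (simp add: I_def)
    finally show ?thesis unfolding sc[OF e] by (simp add: power3_eq_cube power2_eq_square)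
  qed
  have p13: "((\<lambda>\<epsilon>. sqrt (LINT s|lborel.
          (I_op d (abs_conv (\<lambda>x. u (x / \<epsilon>) / \<epsilon>)) s - C_const d * \<bar>s\<bar>)\<^sup>2)) \<longlongrightarrow> 0) (at_right 0)"
  proof -
    have "((\<lambda>\<epsilon>::real. sqrt (\<epsilon> ^ 3 * I)) \<longlongrightarrow> sqrt (0 ^ 3 * I)) (at_right 0)"
      by (intro tendsto_intros)
    then have "((\<lambda>\<epsilon>::real. sqrt (\<epsilon> ^ 3 * I)) \<longlongrightarrow> 0) (at_right 0)" by simp
    moreover have "eventually (\<lambda>\<epsilon>. sqrt (\<epsilon> ^ 3 * I) = sqrt (LINT s|lborel.
          (I_op d (abs_conv (\<lambda>x. u (x / \<epsilon>) / \<epsilon>)) s - C_const d * \<bar>s\<bar>)\<^sup>2)) (at_right (0::real))"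
      using eventually_at_right_less[of "0::real"] by eventually_elim (simp add: vals)
    ultimately show ?thesis by (rule Lim_transform_eventually)
  qed
  have p14: "\<forall>s. ((\<lambda>\<epsilon>. I_op d (abs_conv (\<lambda>x. u (x / \<epsilon>) / \<epsilon>)) s)
        \<longlongrightarrow> C_const d * \<bar>s\<bar>) (at_right 0)"
  proof
    fix s :: real
    have "((\<lambda>\<epsilon>. I_op d (abs_conv (\<lambda>x. u (x / \<epsilon>) / \<epsilon>)) s - C_const d * \<bar>s\<bar>) \<longlongrightarrow> 0) (at_right 0)"
    proof (rule Lim_null_comparison)
      show "eventually (\<lambda>\<epsilon>. norm (I_op d (abs_conv (\<lambda>x. u (x / \<epsilon>) / \<epsilon>)) s - C_const d * \<bar>s\<bar>) \<le> \<epsilon> * B) (at_right 0)"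
        using eventually_at_right_less[of "0::real"]
      proof eventually_elim
        case (elim \<epsilon>)
        then show ?case using B[of "s / \<epsilon>"] by (simp add: X.diff_eq abs_mult mult_left_mono)
      qed
      show "((\<lambda>\<epsilon>. \<epsilon> * B) \<longlongrightarrow> 0) (at_right 0)"
        by (rule tendsto_mult_left_zero) (rule tendsto_ident_at)
    qed
    from tendsto_add[OF this tendsto_const[of "C_const d * \<bar>s\<bar>"]]
    show "((\<lambda>\<epsilon>. I_op d (abs_conv (\<lambda>x. u (x / \<epsilon>) / \<epsilon>)) s) \<longlongrightarrow> C_const d * \<bar>s\<bar>) (at_right 0)"
      by simp
  qed
  have p5': "(\<lambda>s. F s - C_const d * \<bar>s\<bar>) \<in> O[at_top](\<lambda>s. 1 / s)" unfolding GG by (rule p5)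
  have p6': "continuous_on UNIV (\<lambda>s. F s - C_const d * \<bar>s\<bar>)" unfolding GG by (rule X.G_cont)
  have p7': "((\<lambda>s. F s - C_const d * \<bar>s\<bar>) \<longlongrightarrow> 0) at_infinity" unfolding GG by (rule p7)
  have p8': "integrable lborel (\<lambda>s. (F s - C_const d * \<bar>s\<bar>)\<^sup>2)"
    using X.G2_int by (simp add: FF X.G_def)
  show ?thesis
    by (intro conjI p1 p2 p3 p4 p5' p6' p7' p8' p9 p10 p11 p12 p13 p14)
qed

end
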